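(* Let $A\in\mathbb{C}^{2n\times 2n}$ be a normal per-Hermitian matrix all of whose eigenvalues have nonzero imaginary parts. Then there exist a unitary perplectic matrix $U\in\mathbb{C}^{2n\times 2n}$ and a diagonal matrix $D\in\mathbb{C}^{n\times n}$ such that $$A=U\begin{bmatrix} D & 0\\ 0 & F_nD^HF_n\end{bmatrix}U^H .$$
   Context: For $m\ge1$, $F_m\in\mathbb{R}^{m\times m}$ denotes the flip (exchange) matrix with ones on the antidiagonal and zeros elsewhere. A matrix $A\in\mathbb{C}^{2n\times 2n}$ is per-Hermitian if $(F_{2n}A)^H=F_{2n}A$ and perskew-Hermitian if $(F_{2n}A)^H=-F_{2n}A$. A matrix $Z\in\mathbb{C}^{2n\times 2n}$ is perplectic if $Z^HF_{2n}Z=F_{2n}$; "unitary perplectic" means both unitary and perplectic. *)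

theory Defs
  imports "Jordan_Normal_Form.Schur_Decomposition"
begin

definition flip_mat :: "nat \<Rightarrow> complex mat" where
  "flip_mat m = mat m m (\<lambda>(i,j). if i + j + 1 = m then 1 else 0)"

definition per_hermitian :: "nat \<Rightarrow> complex mat \<Rightarrow> bool" where
  "per_hermitian n A \<longleftrightarrow> mat_adjoint (flip_mat (2*n) * A) = flip_mat (2*n) * A"

definition perplectic :: "nat \<Rightarrow> complex mat \<Rightarrow> bool" where
  "perplectic n Z \<longleftrightarrow> mat_adjoint Z * flip_mat (2*n) * Z = flip_mat (2*n)"

definition unitary_mat :: "complex mat \<Rightarrow> bool" where
  "unitary_mat U \<longleftrightarrow> U \<in> carrier_mat (dim_row U) (dim_row U) \<and>
     mat_adjoint U * U = 1\<^sub>m (dim_row U)"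

definition normal_mat :: "complex mat \<Rightarrow> bool" where
  "normal_mat A \<longleftrightarrow> A * mat_adjoint A = mat_adjoint A * A"

end

theory Submission
  imports Defs
begin

lemma adj_dims[simp]: "dim_row (mat_adjoint A) = dim_col A" "dim_col (mat_adjoint A) = dim_row A"
  unfolding mat_adjoint_def by auto
lemma adj_index[simp]: "i < dim_col A \<Longrightarrow> j < dim_row A \<Longrightarrow> mat_adjoint A $$ (i,j) = cnj (A $$ (j,i))"
  unfolding mat_adjoint_def by (auto simp: mat_of_rows_def)

lemma adj_adj[simp]: "mat_adjoint (mat_adjoint (A::complex mat)) = A"
  by (rule eq_matI, auto)

lemma adj_one[simp]: "mat_adjoint (1\<^sub>m n :: complex mat) = 1\<^sub>m n"
  by (rule eq_matI, auto)

lemma adj_zero[simp]: "mat_adjoint (0\<^sub>m n m :: complex mat) = 0\<^sub>m m n"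
  by (rule eq_matI, auto)

lemma adj_carrier[simp]: "A \<in> carrier_mat n m \<Longrightarrow> mat_adjoint A \<in> carrier_mat m n"
  unfolding carrier_mat_def by simp

lemma mult_entry: assumes A: "(A::'a::comm_semiring_0 mat) \<in> carrier_mat n k" and B: "B \<in> carrier_mat k m"
 and i': "j < n" and j': "i < m" shows "(A*B) $$ (j,i) = (\<Sum>l<k. A $$ (j,l) * B $$ (l,i))"
proof -
  have "(A*B) $$ (j,i) = row A j \<bullet> col B i" using A B i' j' by simp
  also have "\<dots> = (\<Sum>l<k. A $$ (j,l) * B $$ (l,i))" using A B i' j' unfolding scalar_prod_def
    by (intro sum.cong, auto)
  finally show ?thesis .
qed

lemma cdot_self: assumes "(w::complex vec) \<in> carrier_vec n"
  shows "w \<bullet>c w = of_real (\<Sum>k<n. (cmod (w$k))^2)"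
proof -
  have "w \<bullet>c w = (\<Sum>k<n. w$k * cnj (w$k))" using assms unfolding scalar_prod_def
    by (intro sum.cong, auto)
  also have "\<dots> = (\<Sum>k<n. of_real ((cmod (w$k))^2))"
    by (intro sum.cong refl, metis complex_norm_square)
  finally show ?thesis by simp
qed

lemma unitary_completion:
  fixes v :: "complex vec"
  assumes v: "v \<in> carrier_vec n" and v0: "v \<noteq> 0\<^sub>v n"
  shows "\<exists>W c. W \<in> carrier_mat n n \<and> mat_adjoint W * W = 1\<^sub>m n \<and> col W 0 = c \<cdot>\<^sub>v v"
proof -
  have n: "n > 0" using v v0 by (cases n, auto)
  interpret cof_vec_space n "TYPE(complex)" .
  define b where "b = basis_completion v"
  from basis_completion[OF v v0, folded b_def]
  have b: "set b \<subseteq> carrier_vec n" and dist_b: "distinct b" 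
    and indep: "\<not> lin_dep (set b)" and hdb: "hd b = v" and len_b: "length b = n" by auto
  define ws where "ws = gram_schmidt n b"
  from gram_schmidt_result[OF b dist_b indep refl, folded ws_def]
  have ws: "set ws \<subseteq> carrier_vec n" "corthogonal ws" "length ws = n" 
    by (auto simp: len_b)
  from hdb len_b n obtain vs where bv: "b = v # vs" by (cases b, auto)
  from gram_schmidt_hd[OF v, of vs, folded bv] have hdws: "hd ws = v" unfolding ws_def .
  hence ws0: "ws ! 0 = v" using ws(3) n by (cases ws, auto)
  define r where "r = (\<lambda>j. Re (ws!j \<bullet>c ws!j))"
  have wsc: "j < n \<Longrightarrow> ws ! j \<in> carrier_vec n" for j using ws by auto
  have rr: "j < n \<Longrightarrow> ws!j \<bullet>c ws!j = of_real (r j)" for j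
    unfolding r_def cdot_self[OF wsc] by simp
  have rpos: "j < n \<Longrightarrow> r j > 0" for j
  proof -
    assume j: "j < n"
    have "r j \<ge> 0" unfolding r_def cdot_self[OF wsc[OF j]] by (simp add: sum_nonneg)
    moreover have "ws!j \<bullet>c ws!j \<noteq> 0" using corthogonalD[OF ws(2), of j j] ws(3) j by auto
    ultimately show ?thesis using rr[OF j] by fastforce
  qed
  define s where "s = (\<lambda>j. complex_of_real (1 / sqrt (r j)))"
  define W where "W = mat n n (\<lambda>(k,j). s j * (ws ! j $ k))"
  have W: "W \<in> carrier_mat n n" unfolding W_def by auto
  have "col W 0 = s 0 \<cdot>\<^sub>v v" 
    by (rule eq_vecI, insert v n, auto simp: W_def ws0)
  moreover have "mat_adjoint W * W = 1\<^sub>m n"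
  proof (rule eq_matI)
    fix i j assume "i < dim_row (1\<^sub>m n)" "j < dim_col (1\<^sub>m n)"
    hence i: "i < n" and j: "j < n" by auto
    have "(mat_adjoint W * W) $$ (i,j) = (\<Sum>k<n. cnj (W $$ (k,i)) * W $$ (k,j))"
      by (subst mult_entry[of _ n n _ n], insert W i j, auto)
    also have "\<dots> = (\<Sum>k<n. cnj (s i) * s j * (ws!j $ k * cnj (ws!i $ k)))"
      by (intro sum.cong, insert i j, auto simp: W_def)
    also have "\<dots> = cnj (s i) * s j * (ws!j \<bullet>c ws!i)"
      unfolding sum_distrib_left[symmetric] scalar_prod_def using wsc[OF i]
      by (intro arg_cong[where f = "(*) _"] sum.cong, auto)
    also have "\<dots> = 1\<^sub>m n $$ (i,j)"
    proof (cases "i = j")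
      case True
      have re: "(1 / sqrt (r i)) * (1 / sqrt (r i)) * r i = 1" using rpos[OF i]
        by (simp add: field_simps)
      have c: "cnj (s i) * s i * (ws!i \<bullet>c ws!i) = 1"
        unfolding rr[OF i] s_def complex_cnj_complex_of_real of_real_mult[symmetric] re by simp
      show ?thesis using True i c by simp
    next
      case False
      then show ?thesis using corthogonalD[OF ws(2), of j i] ws(3) i j by auto
    qed
    finally show "(mat_adjoint W * W) $$ (i,j) = 1\<^sub>m n $$ (i,j)" .
  qed (insert W, auto)
  ultimately show ?thesis using W by blast
qed


lemma adj_four_block: assumes A: "(A::complex mat) \<in> carrier_mat n1 m1" and B: "B \<in> carrier_mat n1 m2"
  and C: "C \<in> carrier_mat n2 m1" and D: "D \<in> carrier_mat n2 m2"
  shows "mat_adjoint (four_block_mat A B C D) = four_block_mat (mat_adjoint A) (mat_adjoint C) (mat_adjoint B) (mat_adjoint D)"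
proof (rule eq_matI)
  fix i j assume i: "i < dim_row (four_block_mat (mat_adjoint A) (mat_adjoint C) (mat_adjoint B) (mat_adjoint D))"
    and j: "j < dim_col (four_block_mat (mat_adjoint A) (mat_adjoint C) (mat_adjoint B) (mat_adjoint D))"
  have dA: "dim_row A = n1" "dim_col A = m1" using A by auto
  have dB: "dim_row B = n1" "dim_col B = m2" using B by auto
  have dC: "dim_row C = n2" "dim_col C = m1" using C by auto
  have dD: "dim_row D = n2" "dim_col D = m2" using D by auto
  from i j have i': "i < m1 + m2" and j': "j < n1 + n2" by (simp_all add: dA dD)
  show "mat_adjoint (four_block_mat A B C D) $$ (i, j) = four_block_mat (mat_adjoint A) (mat_adjoint C) (mat_adjoint B) (mat_adjoint D) $$ (i, j)"
    using i' j' by (simp add: dA dB dC dD)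
qed (insert A D, auto)

lemma adj_mult: assumes A: "(A::complex mat) \<in> carrier_mat n k" and B: "B \<in> carrier_mat k m"
  shows "mat_adjoint (A * B) = mat_adjoint B * mat_adjoint A"
proof (rule eq_matI)
  fix i j assume i: "i < dim_row (mat_adjoint B * mat_adjoint A)" and j: "j < dim_col (mat_adjoint B * mat_adjoint A)"
  from i j A B have i': "i < m" and j': "j < n" by auto
  have "mat_adjoint (A * B) $$ (i, j) = cnj ((A*B) $$ (j,i))" using i' j' A B by simp
  also have "\<dots> = cnj (\<Sum>l<k. A $$ (j,l) * B $$ (l,i))"
    by (subst mult_entry[OF A B j' i'], rule refl)
  also have "\<dots> = (\<Sum>l<k. cnj (B $$ (l,i)) * cnj (A $$ (j,l)))"
    by (simp add: mult.commute)
  also have "\<dots> = (\<Sum>l<k. mat_adjoint B $$ (i,l) * mat_adjoint A $$ (l,j))"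
    by (rule sum.cong, insert i' j' A B, auto)
  also have "\<dots> = (mat_adjoint B * mat_adjoint A) $$ (i, j)"
    by (rule mult_entry[symmetric], insert i' j' A B, auto)
  finally show "mat_adjoint (A * B) $$ (i, j) = (mat_adjoint B * mat_adjoint A) $$ (i, j)" .
qed (insert A B, auto)

lemma ut_1x1: "A \<in> carrier_mat 1 1 \<Longrightarrow> upper_triangular A"
  by (rule upper_triangularI, auto)

lemma unitary_inv: assumes W: "(W::complex mat) \<in> carrier_mat n n" and "mat_adjoint W * W = 1\<^sub>m n"
  shows "W * mat_adjoint W = 1\<^sub>m n"
  by (rule mat_mult_left_right_inverse[OF _ W], insert assms, auto)

lemma schur_unitary:
  fixes A :: "complex mat"
  assumes "A \<in> carrier_mat n n"
  shows "\<exists>U T. similar_mat_wit A T U (mat_adjoint U) \<and> upper_triangular T"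
  using assms
proof (induction n arbitrary: A)
  case 0
  show ?case
    by (rule exI[of _ "1\<^sub>m 0"], rule exI[of _ A], insert 0 similar_mat_wit_refl[OF 0],
      auto intro!: upper_triangularI)
next
  case (Suc m A)
  note A = Suc.prems
  let ?n = "Suc m"
  from char_poly_factorized[OF A] obtain es where cp: "char_poly A = (\<Prod>a\<leftarrow>es. [:- a, 1:])"
    and les: "length es = ?n" by auto
  then obtain e es' where es: "es = e # es'" by (cases es, auto)
  have "eigenvalue A e" unfolding eigenvalue_root_char_poly[OF A] cp es by simp
  from find_eigenvector[OF A this] have ev: "eigenvector A (find_eigenvector A e) e" .
  define v where "v = find_eigenvector A e"
  from ev[folded v_def] A have v: "v \<in> carrier_vec ?n" and v0: "v \<noteq> 0\<^sub>v ?n" and Av: "A *\<^sub>v v = e \<cdot>\<^sub>v v"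
    unfolding eigenvector_def by auto
  from unitary_completion[OF v v0] obtain W c where W: "W \<in> carrier_mat ?n ?n"
    and WW: "mat_adjoint W * W = 1\<^sub>m ?n" and Wc: "col W 0 = c \<cdot>\<^sub>v v" by auto
  have WW': "W * mat_adjoint W = 1\<^sub>m ?n" by (rule unitary_inv[OF W WW])
  have W': "mat_adjoint W \<in> carrier_mat ?n ?n" using W by simp
  define A' where "A' = mat_adjoint W * A * W"
  have A': "A' \<in> carrier_mat ?n ?n" unfolding A'_def using W A by auto
  have simAA': "similar_mat_wit A A' W (mat_adjoint W)"
  proof (rule similar_mat_witI[OF WW' WW _ A A' W W'])
    have AW: "A * W \<in> carrier_mat ?n ?n" using A W by simp
    have "W * A' = W * (mat_adjoint W * (A * W))" unfolding A'_def using assoc_mult_mat[OF W' A W] by simp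
    also have "\<dots> = (W * mat_adjoint W) * (A * W)" using assoc_mult_mat[OF W W' AW] by simp
    also have "\<dots> = A * W" unfolding WW' by (rule left_mult_one_mat[OF AW])
    finally have "W * A' * mat_adjoint W = A * W * mat_adjoint W" by simp
    also have "\<dots> = A * (W * mat_adjoint W)" using assoc_mult_mat[OF A W W'] by simp
    finally show "A = W * A' * mat_adjoint W" unfolding WW' using A by simp
  qed
  have col0: "A' $$ (i, 0) = (if i = 0 then e else 0)" if i: "i < ?n" for i
  proof -
    have cW: "col W 0 \<in> carrier_vec ?n" using W col_dim[of W 0] by simp
    have rW: "row (mat_adjoint W) i \<in> carrier_vec ?n" using W row_carrier[of "mat_adjoint W" i] by simp
    have "A' $$ (i, 0) = (mat_adjoint W * (A * W)) $$ (i, 0)" unfolding A'_def using assoc_mult_mat[OF W' A W] by simp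
    also have "\<dots> = row (mat_adjoint W) i \<bullet> col (A * W) 0" using i W A by simp
    also have "col (A * W) 0 = A *\<^sub>v col W 0" by (rule col_mult2[OF A W], simp)
    also have "\<dots> = e \<cdot>\<^sub>v col W 0" unfolding Wc using Av v A by (simp add: mult_mat_vec smult_smult_assoc mult.commute)
    also have "row (mat_adjoint W) i \<bullet> (e \<cdot>\<^sub>v col W 0) = e * (row (mat_adjoint W) i \<bullet> col W 0)"
      by (rule scalar_prod_smult_distrib[OF rW cW])
    also have "row (mat_adjoint W) i \<bullet> col W 0 = (mat_adjoint W * W) $$ (i, 0)" using i W by simp
    finally show ?thesis unfolding WW using i by simp
  qed
  obtain A1 A2 A0 A3 where sb: "split_block A' 1 1 = (A1,A2,A0,A3)"
    by (cases "split_block A' 1 1", auto)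
  have dA': "dim_row A' = 1 + m" "dim_col A' = 1 + m" using A' by auto
  from split_block[OF sb dA'] have A1: "A1 \<in> carrier_mat 1 1" and A2: "A2 \<in> carrier_mat 1 m"
    and A0: "A0 \<in> carrier_mat m 1" and A3: "A3 \<in> carrier_mat m m" and A'b: "A' = four_block_mat A1 A2 A0 A3"
    by auto
  have A00: "A0 = 0\<^sub>m m 1"
  proof (rule eq_matI)
    fix i j assume "i < dim_row (0\<^sub>m m 1 :: complex mat)" "j < dim_col (0\<^sub>m m 1 :: complex mat)"
    hence i: "i < m" and j: "j = 0" by auto
    have "A0 $$ (i, j) = A' $$ (Suc i, 0)" using sb i j dA' unfolding split_block_def Let_def by auto
    also have "\<dots> = 0" using col0[of "Suc i"] i by simp
    finally show "A0 $$ (i, j) = 0\<^sub>m m 1 $$ (i, j)" using i j by simp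
  qed (insert A0, auto)
  from Suc.IH[OF A3] obtain U3 T3 where sim3: "similar_mat_wit A3 T3 U3 (mat_adjoint U3)"
    and ut3: "upper_triangular T3" by auto
  from similar_mat_witD2[OF A3 sim3] have U3: "U3 \<in> carrier_mat m m" and T3: "T3 \<in> carrier_mat m m"
    and U3U3: "U3 * mat_adjoint U3 = 1\<^sub>m m" by auto
  have U3': "mat_adjoint U3 \<in> carrier_mat m m" using U3 by simp
  have e1: "A2 = 1\<^sub>m 1 * (A2 * U3) * mat_adjoint U3" using A2 U3 U3U3 assoc_mult_mat[OF A2 U3 U3'] by simp
  have e2: "A0 = U3 * 0\<^sub>m m 1 * 1\<^sub>m 1" using A00 U3 by simp
  from similar_mat_wit_four_block[OF similar_mat_wit_refl[OF A1] sim3 e1 e2 A1 A3 zero_carrier_mat mult_carrier_mat[OF A2 U3]]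
  have simB: "similar_mat_wit A' (four_block_mat A1 (A2 * U3) (0\<^sub>m m 1) T3)
    (four_block_mat (1\<^sub>m 1) (0\<^sub>m 1 m) (0\<^sub>m m 1) U3)
    (four_block_mat (1\<^sub>m 1) (0\<^sub>m 1 m) (0\<^sub>m m 1) (mat_adjoint U3))" 
    unfolding A'b using A2 U3 by auto
  have adjP: "mat_adjoint (four_block_mat (1\<^sub>m 1) (0\<^sub>m 1 m) (0\<^sub>m m 1) U3) = 
     four_block_mat (1\<^sub>m 1) (0\<^sub>m 1 m) (0\<^sub>m m 1) (mat_adjoint U3)"
    by (subst adj_four_block[OF _ _ _ U3], auto)
  let ?P = "four_block_mat (1\<^sub>m 1) (0\<^sub>m 1 m) (0\<^sub>m m 1) U3"
  have P: "?P \<in> carrier_mat ?n ?n" using U3 by auto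
  from similar_mat_wit_trans[OF simAA' simB]
  have "similar_mat_wit A (four_block_mat A1 (A2 * U3) (0\<^sub>m m 1) T3) (W * ?P) (mat_adjoint (W * ?P))"
    unfolding adj_mult[OF W P] adjP .
  moreover have "upper_triangular (four_block_mat A1 (A2 * U3) (0\<^sub>m m 1) T3)"
    by (rule upper_triangular_four_block[OF A1 T3 ut_1x1[OF A1] ut3])
  ultimately show ?case by blast
qed


lemma nsq: "z * cnj z = complex_of_real ((cmod z)^2)"
  by (simp add: complex_mult_cnj cmod_power2)

lemma nsq': "cnj z * z = complex_of_real ((cmod z)^2)"
  by (simp add: complex_mult_cnj cmod_power2 mult.commute[of "cnj z"])

lemma normal_ut_diag:
  fixes T :: "complex mat"
  assumes T: "T \<in> carrier_mat n n" and ut: "upper_triangular T"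
    and nm: "T * mat_adjoint T = mat_adjoint T * T"
  shows "diagonal_mat T"
proof -
  have ut': "T $$ (k,i) = 0" if "i < k" "k < n" for i k using ut T that unfolding upper_triangular_def by auto
  have main: "\<forall>j. i < j \<and> j < n \<longrightarrow> T $$ (i,j) = 0" if i: "i < n" for i
    using i
  proof (induction i rule: less_induct)
    case (less i)
    note i = less.prems
    define f where "f = (\<lambda>k. (cmod (T $$ (i,k)))^2)"
    define g where "g = (\<lambda>k. (cmod (T $$ (k,i)))^2)"
    have "(T * mat_adjoint T) $$ (i,i) = (\<Sum>l<n. T $$ (i,l) * mat_adjoint T $$ (l,i))"
      by (rule mult_entry[OF T], insert T i, auto)
    also have "\<dots> = (\<Sum>l<n. of_real (f l))"
      by (rule sum.cong[OF refl], insert T i, simp add: f_def nsq)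
    finally have e1: "(T * mat_adjoint T) $$ (i,i) = of_real (sum f {..<n})" unfolding of_real_sum .
    have "(mat_adjoint T * T) $$ (i,i) = (\<Sum>l<n. mat_adjoint T $$ (i,l) * T $$ (l,i))"
      by (rule mult_entry[OF _ T], insert T i, auto)
    also have "\<dots> = (\<Sum>l<n. of_real (g l))"
      by (rule sum.cong[OF refl], insert T i, simp add: g_def nsq')
    finally have e2: "(mat_adjoint T * T) $$ (i,i) = of_real (sum g {..<n})" unfolding of_real_sum .
    from e1 e2 nm have "complex_of_real (sum f {..<n}) = complex_of_real (sum g {..<n})" by metis
    hence fg: "sum f {..<n} = sum g {..<n}" by (simp only: of_real_eq_iff)
    have g0: "g k = 0" if k: "k \<in> {..<n} - {i}" for k
    proof (cases "k < i")
      case True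
      then show ?thesis using less.IH[OF True] i k unfolding g_def by auto
    next
      case False
      then show ?thesis using ut'[of i k] k unfolding g_def by auto
    qed
    have "sum g {..<n} = g i + sum g ({..<n} - {i})" using i by (simp add: sum.remove)
    also have "sum g ({..<n} - {i}) = 0" using g0 by simp
    finally have sg: "sum g {..<n} = g i" by simp
    have "sum f {..<n} = f i + sum f ({..<n} - {i})" using i by (simp add: sum.remove)
    hence rest: "sum f ({..<n} - {i}) = 0" using fg sg unfolding f_def g_def by simp
    have fnn: "\<forall>k \<in> {..<n} - {i}. f k \<ge> 0" unfolding f_def by auto
    from rest fnn have "\<forall>k \<in> {..<n} - {i}. f k = 0"
      using sum_nonneg_eq_0_iff[of "{..<n} - {i}" f] by auto
    then show ?case unfolding f_def by auto
  qed
  show ?thesis unfolding diagonal_mat_def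
  proof (intro allI impI)
    fix i j assume i: "i < dim_row T" and j: "j < dim_col T" and ij: "i \<noteq> j"
    show "T $$ (i,j) = 0"
    proof (cases "i < j")
      case True thus ?thesis using main[of i] i j T by auto
    next
      case False thus ?thesis using ut'[of j i] i j ij T by auto
    qed
  qed
qed


lemma sum_delta_r: assumes "(a::nat) < m" shows "(\<Sum>l<m. f l * (if l = a then 1 else 0)) = (f a :: 'a::semiring_1)"
proof -
  have "(\<Sum>l<m. f l * (if l = a then 1 else 0)) = (\<Sum>l<m. if l = a then f l else 0)" by (rule sum.cong, auto)
  also have "\<dots> = f a" using assms by (subst sum.delta, auto)
  finally show ?thesis .
qed

lemma sum_delta_l: assumes "(a::nat) < m" shows "(\<Sum>l<m. (if l = a then 1 else 0) * f l) = (f a :: 'a::semiring_1)"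
proof -
  have "(\<Sum>l<m. (if l = a then 1 else 0) * f l) = (\<Sum>l<m. if l = a then f l else 0)" by (rule sum.cong, auto)
  also have "\<dots> = f a" using assms by (subst sum.delta, auto)
  finally show ?thesis .
qed

lemma flip_carrier[simp]: "flip_mat m \<in> carrier_mat m m"
  unfolding flip_mat_def by auto

lemma flip_dims[simp]: "dim_row (flip_mat m) = m" "dim_col (flip_mat m) = m"
  unfolding flip_mat_def by auto

lemma flip_index: "i < m \<Longrightarrow> j < m \<Longrightarrow> flip_mat m $$ (i,j) = (if i = m - 1 - j then 1 else 0)"
  unfolding flip_mat_def by auto

lemma flip_adj[simp]: "mat_adjoint (flip_mat m) = flip_mat m"
  by (rule eq_matI, auto simp: flip_index)

lemma mult_flip_right: assumes X: "X \<in> carrier_mat r m" and i: "i < r" and k: "k < m"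
  shows "(X * flip_mat m) $$ (i,k) = X $$ (i, m - 1 - k)"
proof -
  have "(X * flip_mat m) $$ (i,k) = (\<Sum>l<m. X $$ (i,l) * flip_mat m $$ (l,k))"
    by (rule mult_entry[OF X flip_carrier i k])
  also have "\<dots> = (\<Sum>l<m. X $$ (i,l) * (if l = m - 1 - k then 1 else 0))"
    by (rule sum.cong[OF refl], insert k, simp add: flip_index)
  also have "\<dots> = X $$ (i, m - 1 - k)" using k by (intro sum_delta_r, auto)
  finally show ?thesis .
qed

lemma mult_flip_left: assumes X: "X \<in> carrier_mat m c" and i: "i < m" and k: "k < c"
  shows "(flip_mat m * X) $$ (i,k) = X $$ (m - 1 - i, k)"
proof -
  have "(flip_mat m * X) $$ (i,k) = (\<Sum>l<m. flip_mat m $$ (i,l) * X $$ (l,k))"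
    by (rule mult_entry[OF flip_carrier X i k])
  also have "\<dots> = (\<Sum>l<m. (if l = m - 1 - i then 1 else 0) * X $$ (l,k))"
    by (rule sum.cong[OF refl], insert i, auto simp: flip_index)
  also have "\<dots> = X $$ (m - 1 - i, k)" using i by (intro sum_delta_l, auto)
  finally show ?thesis .
qed

lemma flip_flip[simp]: "flip_mat m * flip_mat m = 1\<^sub>m m"
proof (rule eq_matI)
  fix i j assume "i < dim_row (1\<^sub>m m :: complex mat)" "j < dim_col (1\<^sub>m m :: complex mat)"
  hence i: "i < m" and j: "j < m" by auto
  show "(flip_mat m * flip_mat m) $$ (i,j) = 1\<^sub>m m $$ (i,j)"
    unfolding mult_flip_left[OF flip_carrier i j] using i j by (auto simp: flip_index)
qed auto

lemma diag_mult_left: assumes L: "(L::complex mat) \<in> carrier_mat m m" and dL: "diagonal_mat L"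
  and X: "X \<in> carrier_mat m c" and i: "i < m" and k: "k < c"
  shows "(L * X) $$ (i,k) = L $$ (i,i) * X $$ (i,k)"
proof -
  have "(L * X) $$ (i,k) = (\<Sum>l<m. L $$ (i,l) * X $$ (l,k))"
    by (rule mult_entry[OF L X i k])
  also have "\<dots> = (\<Sum>l<m. (if l = i then 1 else 0) * (L $$ (i,l) * X $$ (l,k)))"
    by (rule sum.cong[OF refl], insert i L dL, auto simp: diagonal_mat_def)
  also have "\<dots> = L $$ (i,i) * X $$ (i,k)" using i by (subst sum_delta_l, auto)
  finally show ?thesis .
qed

lemma diag_mult_right: assumes L: "(L::complex mat) \<in> carrier_mat m m" and dL: "diagonal_mat L"
  and X: "X \<in> carrier_mat r m" and i: "i < r" and k: "k < m"
  shows "(X * L) $$ (i,k) = X $$ (i,k) * L $$ (k,k)"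
proof -
  have "(X * L) $$ (i,k) = (\<Sum>l<m. X $$ (i,l) * L $$ (l,k))"
    by (rule mult_entry[OF X L i k])
  also have "\<dots> = (\<Sum>l<m. (X $$ (i,l) * L $$ (l,k)) * (if l = k then 1 else 0))"
    by (rule sum.cong[OF refl], insert k L dL, auto simp: diagonal_mat_def)
  also have "\<dots> = X $$ (i,k) * L $$ (k,k)" using k by (subst sum_delta_r, auto)
  finally show ?thesis .
qed

lemma sq_mult[simp]: "A \<in> carrier_mat n n \<Longrightarrow> B \<in> carrier_mat n n \<Longrightarrow> A * B \<in> carrier_mat n n"
  by simp

lemma sq_assoc: "A \<in> carrier_mat n n \<Longrightarrow> B \<in> carrier_mat n n \<Longrightarrow> C \<in> carrier_mat n n \<Longrightarrow> A * B * C = A * (B * C)"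
  by (rule assoc_mult_mat)

lemma sq_cancel: "(A::complex mat) \<in> carrier_mat n n \<Longrightarrow> B \<in> carrier_mat n n \<Longrightarrow> C \<in> carrier_mat n n \<Longrightarrow> A * B = 1\<^sub>m n \<Longrightarrow> A * (B * C) = C"
  by (subst assoc_mult_mat[symmetric, of _ n n _ n _ n], auto intro: left_mult_one_mat)



lemma spectral_normal:
  fixes A :: "complex mat"
  assumes A: "A \<in> carrier_mat n n" and nm: "normal_mat A"
  shows "\<exists>U L. U \<in> carrier_mat n n \<and> mat_adjoint U * U = 1\<^sub>m n \<and> U * mat_adjoint U = 1\<^sub>m n \<and>
    L \<in> carrier_mat n n \<and> diagonal_mat L \<and> A = U * L * mat_adjoint U"
proof -
  from schur_unitary[OF A] obtain U T where sim: "similar_mat_wit A T U (mat_adjoint U)"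
    and ut: "upper_triangular T" by auto
  from similar_mat_witD2[OF A sim] have UU': "U * mat_adjoint U = 1\<^sub>m n" and U'U: "mat_adjoint U * U = 1\<^sub>m n"
    and AT: "A = U * T * mat_adjoint U" and T: "T \<in> carrier_mat n n" and U: "U \<in> carrier_mat n n" by blast+
  have U': "mat_adjoint U \<in> carrier_mat n n" using U by simp
  have A': "mat_adjoint A \<in> carrier_mat n n" using A by simp
  note sa = sq_assoc[of _ n]
  have TA: "T = mat_adjoint U * A * U"
    unfolding AT using U U' T U'U by (simp add: sa sq_cancel[of _ n])
  have T': "mat_adjoint T = mat_adjoint U * mat_adjoint A * U"
    unfolding TA using U U' A by (simp add: adj_mult[of _ n n _ n] sa)
  have "T * mat_adjoint T = mat_adjoint U * (A * mat_adjoint A) * U"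
    unfolding T' unfolding TA using U U' A A' UU' by (simp add: sa sq_cancel[of _ n])
  also have "A * mat_adjoint A = mat_adjoint A * A" using nm unfolding normal_mat_def .
  also have "mat_adjoint U * (mat_adjoint A * A) * U = mat_adjoint T * T"
    unfolding T' unfolding TA using U U' A A' UU' by (simp add: sa sq_cancel[of _ n])
  finally have "T * mat_adjoint T = mat_adjoint T * T" .
  from normal_ut_diag[OF T ut this] have "diagonal_mat T" .
  thus ?thesis using U T UU' U'U AT by blast
qed


lemma count_half:
  fixes q :: "nat \<Rightarrow> nat \<Rightarrow> real" and P :: "nat \<Rightarrow> bool"
  assumes row: "\<And>i. i < N \<Longrightarrow> (\<Sum>j<N. q i j) = 1"
    and sym: "\<And>i j. i < N \<Longrightarrow> j < N \<Longrightarrow> q i j = q j i"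
    and zero: "\<And>i j. i < N \<Longrightarrow> j < N \<Longrightarrow> P i = P j \<Longrightarrow> q i j = 0"
  shows "card {i. i < N \<and> P i} = card {i. i < N \<and> \<not> P i}"
proof -
  define S where "S = {i. i < N \<and> P i}"
  define S' where "S' = {i. i < N \<and> \<not> P i}"
  have fin: "finite S" "finite S'" unfolding S_def S'_def by auto
  have un: "{..<N} = S \<union> S'" and dis: "S \<inter> S' = {}" unfolding S_def S'_def by auto
  have split: "(\<Sum>j<N. q i j) = (\<Sum>j\<in>S. q i j) + (\<Sum>j\<in>S'. q i j)" for i
    unfolding un by (rule sum.union_disjoint[OF fin dis])
  have c1: "real (card S) = (\<Sum>i\<in>S. \<Sum>j\<in>S'. q i j)"
  proof -
    have "real (card S) = (\<Sum>i\<in>S. (1::real))" by simp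
    also have "\<dots> = (\<Sum>i\<in>S. \<Sum>j\<in>S'. q i j)"
    proof (rule sum.cong[OF refl])
      fix i assume i: "i \<in> S"
      have "(\<Sum>j\<in>S. q i j) = 0" using i by (intro sum.neutral, auto simp: S_def intro!: zero)
      thus "1 = (\<Sum>j\<in>S'. q i j)" using row[of i] split[of i] i unfolding S_def by auto
    qed
    finally show ?thesis .
  qed
  have c2: "real (card S') = (\<Sum>i\<in>S'. \<Sum>j\<in>S. q i j)"
  proof -
    have "real (card S') = (\<Sum>i\<in>S'. (1::real))" by simp
    also have "\<dots> = (\<Sum>i\<in>S'. \<Sum>j\<in>S. q i j)"
    proof (rule sum.cong[OF refl])
      fix i assume i: "i \<in> S'"
      have "(\<Sum>j\<in>S'. q i j) = 0" using i by (intro sum.neutral, auto simp: S'_def intro!: zero)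
      thus "1 = (\<Sum>j\<in>S. q i j)" using row[of i] split[of i] i unfolding S'_def by auto
    qed
    finally show ?thesis .
  qed
  have "(\<Sum>i\<in>S'. \<Sum>j\<in>S. q i j) = (\<Sum>j\<in>S. \<Sum>i\<in>S'. q i j)" by (rule sum.swap)
  also have "\<dots> = (\<Sum>j\<in>S. \<Sum>i\<in>S'. q j i)"
    by (intro sum.cong refl sym, auto simp: S_def S'_def)
  finally have "real (card S) = real (card S')" using c1 c2 by simp
  thus ?thesis unfolding S_def S'_def by simp
qed

lemma adj_diag: assumes "(L::complex mat) \<in> carrier_mat m m" "diagonal_mat L" shows "diagonal_mat (mat_adjoint L)"
  using assms unfolding diagonal_mat_def by auto

lemma FDF_index: assumes D: "(D::complex mat) \<in> carrier_mat n n" and p: "p < n" and q: "q < n"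
  shows "(flip_mat n * mat_adjoint D * flip_mat n) $$ (p,q) = cnj (D $$ (n - 1 - q, n - 1 - p))"
proof -
  have D': "mat_adjoint D \<in> carrier_mat n n" using D by simp
  have FD: "flip_mat n * mat_adjoint D \<in> carrier_mat n n" using D' by simp
  have "(flip_mat n * mat_adjoint D * flip_mat n) $$ (p,q) = (flip_mat n * mat_adjoint D) $$ (p, n - 1 - q)"
    by (rule mult_flip_right[OF FD p q])
  also have "\<dots> = mat_adjoint D $$ (n - 1 - p, n - 1 - q)"
    by (rule mult_flip_left[OF D' p], insert q, auto)
  also have "\<dots> = cnj (D $$ (n - 1 - q, n - 1 - p))" using D p q by simp
  finally show ?thesis .
qed



theorem lemma2p6:
  fixes n :: nat and A :: "complex mat"
  assumes "A \<in> carrier_mat (2*n) (2*n)"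
    and "normal_mat A"
    and "per_hermitian n A"
    and "\<And>ev. eigenvalue A ev \<Longrightarrow> Im ev \<noteq> 0"
  shows "\<exists>U D. U \<in> carrier_mat (2*n) (2*n) \<and> unitary_mat U \<and> perplectic n U \<and>
    D \<in> carrier_mat n n \<and> diagonal_mat D \<and>
    A = U * four_block_mat D (0\<^sub>m n n) (0\<^sub>m n n)
          (flip_mat n * mat_adjoint D * flip_mat n) * mat_adjoint U"
proof -
  define N where "N = 2 * n"
  have A: "A \<in> carrier_mat N N" using assms(1) unfolding N_def .
  note ev = assms(4)
  define F where "F = flip_mat N"
  have F: "F \<in> carrier_mat N N" unfolding F_def by simp
  have FF: "F * F = 1\<^sub>m N" unfolding F_def by simp
  have F'[simp]: "mat_adjoint F = F" unfolding F_def by simp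
  have A': "mat_adjoint A \<in> carrier_mat N N" using A by simp
  note sa = sq_assoc[of _ N]
  note sc = sq_cancel[of _ N]
  from spectral_normal[OF A assms(2)] obtain U L where U: "U \<in> carrier_mat N N"
    and U'U: "mat_adjoint U * U = 1\<^sub>m N" and UU': "U * mat_adjoint U = 1\<^sub>m N"
    and L: "L \<in> carrier_mat N N" and dL: "diagonal_mat L" and AL: "A = U * L * mat_adjoint U" by blast
  have U': "mat_adjoint U \<in> carrier_mat N N" using U by simp
  have L': "mat_adjoint L \<in> carrier_mat N N" using L by simp
  define \<mu> where "\<mu> = (\<lambda>i. L $$ (i,i))"
  have LA: "L = mat_adjoint U * A * U"
    unfolding AL using U U' L U'U by (simp add: sa sc)
  have LA': "mat_adjoint L = mat_adjoint U * mat_adjoint A * U"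
    unfolding LA using U U' A by (simp add: adj_mult[of _ N N _ N] sa)
  have Im0: "Im (\<mu> i) \<noteq> 0" if i: "i < N" for i
  proof -
    have AU: "A * U = U * L" unfolding AL using U U' L U'U by (simp add: sa sc)
    have cU: "col U i \<in> carrier_vec N" using U i by simp
    have "A *\<^sub>v col U i = \<mu> i \<cdot>\<^sub>v col U i"
    proof (rule eq_vecI)
      fix k assume k: "k < dim_vec (\<mu> i \<cdot>\<^sub>v col U i)"
      hence k: "k < N" using U by simp
      have "(A *\<^sub>v col U i) $ k = (A * U) $$ (k, i)" using A U k i by simp
      also have "\<dots> = (U * L) $$ (k, i)" unfolding AU ..
      also have "\<dots> = U $$ (k,i) * \<mu> i" unfolding \<mu>_def by (rule diag_mult_right[OF L dL U k i])
      finally show "(A *\<^sub>v col U i) $ k = (\<mu> i \<cdot>\<^sub>v col U i) $ k" using U k i by simp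
    qed (insert A U, auto)
    moreover have "col U i \<noteq> 0\<^sub>v N"
    proof
      assume z: "col U i = 0\<^sub>v N"
      have "(mat_adjoint U * U) $$ (i,i) = row (mat_adjoint U) i \<bullet> col U i" using U i by simp
      also have "\<dots> = 0" unfolding z by (rule scalar_prod_right_zero, insert U i, simp)
      finally show False unfolding U'U using i by simp
    qed
    ultimately have "eigenvalue A (\<mu> i)" unfolding eigenvalue_def eigenvector_def using cU A by auto
    thus ?thesis by (rule ev)
  qed
  have AHF: "mat_adjoint A * F = F * A"
    using assms(3) unfolding per_hermitian_def F_def[symmetric] N_def[symmetric]
    using adj_mult[OF F A] by simp
  have AF: "A * F = F * mat_adjoint A"
  proof -
    have "A * F = F * (F * A) * F" using F A FF by (simp add: sa sc)
    also have "\<dots> = F * mat_adjoint A * (F * F)" unfolding AHF[symmetric] using F A' by (simp add: sa)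
    finally show ?thesis unfolding FF using right_mult_one_mat[OF mult_carrier_mat[OF F A']] by simp
  qed
  define M where "M = mat_adjoint U * F * U"
  have M: "M \<in> carrier_mat N N" unfolding M_def using U U' F by simp
  have MH: "mat_adjoint M = M" unfolding M_def using U U' F by (simp add: adj_mult[of _ N N _ N] sa)
  have MM: "M * M = 1\<^sub>m N" unfolding M_def using U U' F UU' FF U'U by (simp add: sa sc)
  have LM: "L * M = M * mat_adjoint L"
  proof -
    have "L * M = mat_adjoint U * (A * F) * U" unfolding LA M_def using U U' F A UU' by (simp add: sa sc)
    also have "\<dots> = M * mat_adjoint L" unfolding AF LA' M_def using U U' F A' UU' by (simp add: sa sc)
    finally show ?thesis .
  qed
  have Mev: "\<mu> i * M $$ (i,j) = M $$ (i,j) * cnj (\<mu> j)" if i: "i < N" and j: "j < N" for i j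
  proof -
    have "\<mu> i * M $$ (i,j) = (L * M) $$ (i,j)" unfolding \<mu>_def by (rule diag_mult_left[OF L dL M i j, symmetric])
    also have "\<dots> = (M * mat_adjoint L) $$ (i,j)" unfolding LM ..
    also have "\<dots> = M $$ (i,j) * mat_adjoint L $$ (j,j)" by (rule diag_mult_right[OF L' adj_diag[OF L dL] M i j])
    finally show ?thesis unfolding \<mu>_def using L j by simp
  qed
  define P where "P = (\<lambda>i. Im (\<mu> i) > 0)"
  have Mzero: "M $$ (i,j) = 0" if i: "i < N" and j: "j < N" and Pij: "P i = P j" for i j
  proof (rule ccontr)
    assume nz: "M $$ (i,j) \<noteq> 0"
    from Mev[OF i j] nz have "\<mu> i = cnj (\<mu> j)" by (simp add: mult.commute)
    hence "Im (\<mu> i) = - Im (\<mu> j)" by simp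
    thus False using Pij Im0[OF i] Im0[OF j] unfolding P_def by linarith
  qed
  have Mh: "M $$ (j,i) = cnj (M $$ (i,j))" if i: "i < N" and j: "j < N" for i j
  proof -
    have "M $$ (j,i) = mat_adjoint M $$ (j,i)" unfolding MH ..
    thus ?thesis using M i j by simp
  qed
  define q where "q = (\<lambda>i j. (cmod (M $$ (i,j)))^2)"
  have qrow: "(\<Sum>j<N. q i j) = 1" if i: "i < N" for i
  proof -
    have "(M * M) $$ (i,i) = (\<Sum>j<N. M $$ (i,j) * M $$ (j,i))" by (rule mult_entry[OF M M i i])
    also have "\<dots> = (\<Sum>j<N. complex_of_real (q i j))"
    proof (rule sum.cong[OF refl])
      fix j assume "j \<in> {..<N}"
      hence j: "j < N" by simp
      show "M $$ (i,j) * M $$ (j,i) = complex_of_real (q i j)"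
        unfolding Mh[OF i j] q_def by (rule nsq)
    qed
    finally have "complex_of_real (\<Sum>j<N. q i j) = 1" unfolding MM of_real_sum using i by simp
    thus ?thesis by (simp only: of_real_eq_1_iff)
  qed
  have qsym: "q i j = q j i" if i: "i < N" and j: "j < N" for i j
    unfolding q_def using Mh[OF i j] by simp
  have card: "card {i. i < N \<and> P i} = card {i. i < N \<and> \<not> P i}"
    by (rule count_half[of N q], insert qrow qsym Mzero, auto simp: q_def)
  have "card {i. i < N \<and> P i} + card {i. i < N \<and> \<not> P i} = card ({i. i < N \<and> P i} \<union> {i. i < N \<and> \<not> P i})"
    by (rule card_Un_disjoint[symmetric], auto)
  also have "{i. i < N \<and> P i} \<union> {i. i < N \<and> \<not> P i} = {..<N}" by auto
  finally have cardS: "card {i. i < N \<and> P i} = n" using card unfolding N_def by simp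
  define S where "S = {i. i < N \<and> P i}"
  have finS: "finite S" unfolding S_def by auto
  define s where "s = sorted_list_of_set S"
  define \<sigma> where "\<sigma> = (\<lambda>j. s ! j)"
  have ls: "length s = n" unfolding s_def using cardS S_def by simp
  have ds: "distinct s" unfolding s_def by simp
  have ss: "set s = S" unfolding s_def using finS by simp
  have sig: "\<sigma> j < N" "P (\<sigma> j)" if j: "j < n" for j
    using nth_mem[of j s] j ls ss unfolding \<sigma>_def S_def by auto
  have siginj: "(\<sigma> j = \<sigma> k) = (j = k)" if j: "j < n" and k: "k < n" for j k
    unfolding \<sigma>_def using nth_eq_iff_index_eq[OF ds] j k ls by auto
  have Nn: "N = n + n" unfolding N_def by simp
  define W where "W = mat N N (\<lambda>(i,j). if j < n then (if i = \<sigma> j then 1 else 0) else M $$ (i, \<sigma> (N - 1 - j)))"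
  have W: "W \<in> carrier_mat N N" unfolding W_def by simp
  have Wi: "W $$ (i,j) = (if j < n then (if i = \<sigma> j then 1 else 0) else M $$ (i, \<sigma> (N - 1 - j)))"
    if "i < N" "j < N" for i j unfolding W_def using that by simp
  define D where "D = mat n n (\<lambda>(i,j). if i = j then \<mu> (\<sigma> i) else 0)"
  have D: "D \<in> carrier_mat n n" unfolding D_def by simp
  have dD: "diagonal_mat D" unfolding D_def diagonal_mat_def by simp
  define B where "B = four_block_mat D (0\<^sub>m n n) (0\<^sub>m n n) (flip_mat n * mat_adjoint D * flip_mat n)"
  have FDF: "flip_mat n * mat_adjoint D * flip_mat n \<in> carrier_mat n n" using D by simp
  have B: "B \<in> carrier_mat N N" unfolding B_def Nn using D FDF by simp
  have Bi: "B $$ (k,l) = (if k = l then (if k < n then \<mu> (\<sigma> k) else cnj (\<mu> (\<sigma> (N - 1 - k)))) else 0)"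
    if k: "k < N" and l: "l < N" for k l
  proof -
    have dims: "dim_row D = n" "dim_col D = n" "dim_row (flip_mat n * mat_adjoint D * flip_mat n) = n"
      "dim_col (flip_mat n * mat_adjoint D * flip_mat n) = n" using D FDF by auto
    have kl: "k < n + n" "l < n + n" using k l Nn by auto
    show ?thesis
    proof (cases "k < n")
      case True
      then show ?thesis unfolding B_def using kl dims by (auto simp: D_def)
    next
      case False
      note k' = this
      show ?thesis
      proof (cases "l < n")
        case True
        then show ?thesis unfolding B_def using kl dims k' by auto
      next
        case False
        have e: "B $$ (k,l) = (flip_mat n * mat_adjoint D * flip_mat n) $$ (k - n, l - n)"
          unfolding B_def using kl dims k' False by simp
        have kn: "k - n < n" "l - n < n" using kl k' False by auto
        show ?thesis unfolding e FDF_index[OF D kn] using kn k' False Nn by (auto simp: D_def)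
      qed
    qed
  qed
  have dB: "diagonal_mat B" unfolding diagonal_mat_def using B Bi by auto
  have MW: "M * W = W * F"
  proof (rule eq_matI)
    fix i k assume "i < dim_row (W * F)" "k < dim_col (W * F)"
    hence i: "i < N" and k: "k < N" using W F by auto
    have "(W * F) $$ (i,k) = W $$ (i, N - 1 - k)" unfolding F_def by (rule mult_flip_right[OF W i k])
    also have "\<dots> = (if k < n then M $$ (i, \<sigma> k) else (if i = \<sigma> (N - 1 - k) then 1 else 0))"
      using Wi[of i "N - 1 - k"] i k Nn by auto
    finally have r: "(W * F) $$ (i,k) = \<dots>" .
    have "(M * W) $$ (i,k) = (\<Sum>l<N. M $$ (i,l) * W $$ (l,k))" by (rule mult_entry[OF M W i k])
    also have "\<dots> = (if k < n then M $$ (i, \<sigma> k) else (if i = \<sigma> (N - 1 - k) then 1 else 0))"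
    proof (cases "k < n")
      case True
      have "(\<Sum>l<N. M $$ (i,l) * W $$ (l,k)) = (\<Sum>l<N. M $$ (i,l) * (if l = \<sigma> k then 1 else 0))"
        by (rule sum.cong[OF refl], insert True k, simp add: Wi)
      also have "\<dots> = M $$ (i, \<sigma> k)" by (rule sum_delta_r[OF sig(1)[OF True]])
      finally show ?thesis using True by simp
    next
      case False
      have b: "\<sigma> (N - 1 - k) < N" using sig(1)[of "N - 1 - k"] False k Nn by auto
      have "(\<Sum>l<N. M $$ (i,l) * W $$ (l,k)) = (\<Sum>l<N. M $$ (i,l) * M $$ (l, \<sigma> (N - 1 - k)))"
        by (rule sum.cong[OF refl], insert False k, simp add: Wi)
      also have "\<dots> = (M * M) $$ (i, \<sigma> (N - 1 - k))" by (rule mult_entry[OF M M i b, symmetric])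
      finally show ?thesis unfolding MM using False i b by simp
    qed
    finally show "(M * W) $$ (i,k) = (W * F) $$ (i,k)" unfolding r .
  qed (insert M W F, auto)
  have WW: "mat_adjoint W * W = 1\<^sub>m N"
  proof (rule eq_matI)
    fix j k assume "j < dim_row (1\<^sub>m N :: complex mat)" "k < dim_col (1\<^sub>m N :: complex mat)"
    hence j: "j < N" and k: "k < N" by auto
    have "(mat_adjoint W * W) $$ (j,k) = (\<Sum>i<N. mat_adjoint W $$ (j,i) * W $$ (i,k))"
      by (rule mult_entry[OF _ W j k], insert W, simp)
    also have "\<dots> = (\<Sum>i<N. cnj (W $$ (i,j)) * W $$ (i,k))"
      by (rule sum.cong[OF refl], insert W j, simp)
    also have "\<dots> = 1\<^sub>m N $$ (j,k)"
    proof (cases "j < n")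
      case jn: True
      have "(\<Sum>i<N. cnj (W $$ (i,j)) * W $$ (i,k)) = (\<Sum>i<N. (if i = \<sigma> j then 1 else 0) * W $$ (i,k))"
        by (rule sum.cong[OF refl], insert jn j, simp add: Wi)
      also have "\<dots> = W $$ (\<sigma> j, k)" by (rule sum_delta_l[OF sig(1)[OF jn]])
      also have "\<dots> = 1\<^sub>m N $$ (j,k)"
      proof (cases "k < n")
        case True
        then show ?thesis using Wi[OF sig(1)[OF jn] k] siginj[OF jn True] j k by auto
      next
        case False
        have b: "N - 1 - k < n" using False k Nn by auto
        have "W $$ (\<sigma> j, k) = M $$ (\<sigma> j, \<sigma> (N - 1 - k))" using Wi[OF sig(1)[OF jn] k] False by simp
        also have "\<dots> = 0" by (rule Mzero[OF sig(1)[OF jn] sig(1)[OF b]], insert sig(2)[OF jn] sig(2)[OF b], simp)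
        finally show ?thesis using False jn j k by simp
      qed
      finally show ?thesis .
    next
      case jn: False
      have a: "N - 1 - j < n" using jn j Nn by auto
      define a' where "a' = \<sigma> (N - 1 - j)"
      have a': "a' < N" "P a'" unfolding a'_def using sig[OF a] by auto
      have "(\<Sum>i<N. cnj (W $$ (i,j)) * W $$ (i,k)) = (\<Sum>i<N. M $$ (a', i) * W $$ (i,k))"
      proof (rule sum.cong[OF refl])
        fix i assume "i \<in> {..<N}"
        hence i: "i < N" by simp
        show "cnj (W $$ (i,j)) * W $$ (i,k) = M $$ (a', i) * W $$ (i,k)"
          using Wi[OF i j] jn Mh[OF i a'(1)] unfolding a'_def by simp
      qed
      also have "\<dots> = (M * W) $$ (a', k)" by (rule mult_entry[OF M W a'(1) k, symmetric])
      also have "\<dots> = (W * F) $$ (a', k)" unfolding MW ..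
      also have "\<dots> = W $$ (a', N - 1 - k)" unfolding F_def by (rule mult_flip_right[OF W a'(1) k])
      also have "\<dots> = 1\<^sub>m N $$ (j,k)"
      proof (cases "k < n")
        case True
        have b: "N - 1 - (N - 1 - k) = k" using k by auto
        have "W $$ (a', N - 1 - k) = M $$ (a', \<sigma> k)" using Wi[OF a'(1), of "N - 1 - k"] True k Nn b by auto
        also have "\<dots> = 0" by (rule Mzero[OF a'(1) sig(1)[OF True]], insert a' sig(2)[OF True], simp)
        finally show ?thesis using True jn j k by simp
      next
        case False
        have b: "N - 1 - k < n" using False k Nn by auto
        have "W $$ (a', N - 1 - k) = (if a' = \<sigma> (N - 1 - k) then 1 else 0)" using Wi[OF a'(1), of "N - 1 - k"] b k by auto
        also have "\<dots> = (if j = k then 1 else 0)" unfolding a'_def siginj[OF a b] using j k by auto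
        finally show ?thesis using j k by simp
      qed
      finally show ?thesis .
    qed
    finally show "(mat_adjoint W * W) $$ (j,k) = 1\<^sub>m N $$ (j,k)" .
  qed (insert W, auto)
  have WW': "W * mat_adjoint W = 1\<^sub>m N" by (rule unitary_inv[OF W WW])
  have W': "mat_adjoint W \<in> carrier_mat N N" using W by simp
  have LW: "L * W = W * B"
  proof (rule eq_matI)
    fix i k assume "i < dim_row (W * B)" "k < dim_col (W * B)"
    hence i: "i < N" and k: "k < N" using W B by auto
    have "(L * W) $$ (i,k) = \<mu> i * W $$ (i,k)" unfolding \<mu>_def by (rule diag_mult_left[OF L dL W i k])
    also have "\<dots> = W $$ (i,k) * B $$ (k,k)"
    proof (cases "k < n")
      case True
      then show ?thesis using Wi[OF i k] Bi[OF k k] by auto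
    next
      case False
      have b: "N - 1 - k < n" using False k Nn by auto
      show ?thesis using Wi[OF i k] Bi[OF k k] False Mev[OF i sig(1)[OF b]] by simp
    qed
    also have "\<dots> = (W * B) $$ (i,k)" by (rule diag_mult_right[OF B dB W i k, symmetric])
    finally show "(L * W) $$ (i,k) = (W * B) $$ (i,k)" .
  qed (insert L W B, auto)
  define V where "V = U * W"
  have V: "V \<in> carrier_mat N N" unfolding V_def using U W by simp
  have V': "mat_adjoint V = mat_adjoint W * mat_adjoint U" unfolding V_def by (rule adj_mult[OF U W])
  have VV: "mat_adjoint V * V = 1\<^sub>m N" unfolding V' unfolding V_def using U U' W W' U'U WW
    by (simp add: sa sc)
  have uV: "unitary_mat V" unfolding unitary_mat_def using V VV by simp
  have "mat_adjoint V * F * V = mat_adjoint W * (M * W)" unfolding V' unfolding V_def M_def using U U' W W' F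
    by (simp add: sa)
  also have "\<dots> = F" unfolding MW using W W' F WW by (simp add: sa sc)
  finally have pV: "perplectic n V" unfolding perplectic_def F_def N_def .
  have "V * B * mat_adjoint V = U * ((L * W) * mat_adjoint W) * mat_adjoint U"
    unfolding V' unfolding V_def LW using U U' W W' B by (simp add: sa)
  also have "\<dots> = A" unfolding AL using U U' W W' L WW' by (simp add: sa sc)
  finally have AV: "A = V * B * mat_adjoint V" ..
  show ?thesis
    by (rule exI[of _ V], rule exI[of _ D], insert V uV pV D dD AV, unfold B_def N_def, auto)
qed
end
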